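(* Every nonzero Lie algebra endomorphism of $\mathbb{W}_1$ is an automorphism; that is, $\mathrm{End}(\mathbb{W}_1)\setminus\{0\} = \mathrm{Aut}(\mathbb{W}_1)$.
   Context: $\Bbbk$ is a field of characteristic zero; $\mathbb{W}_1 = \mathrm{Der}(\Bbbk[t]) = \Bbbk[t]\partial$, $\partial = d/dt$, with bracket $[f\partial,g\partial] = (fg'-f'g)\partial$. $\mathrm{End}$ and $\mathrm{Aut}$ denote Lie algebra endomorphisms and automorphisms. *)

theory Defs
  imports "HOL-Computational_Algebra.Polynomial"
begin

text \<open>The Witt algebra W1 = Der(k[t]) = k[t] d/dt is modelled by identifying
  f d/dt with the polynomial f; the bracket is [f,g] = f g' - f' g.\<close>

definition witt_bracket :: "'a::field_char_0 poly \<Rightarrow> 'a poly \<Rightarrow> 'a poly" where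
  "witt_bracket f g = f * pderiv g - pderiv f * g"

definition witt_End :: "('a::field_char_0 poly \<Rightarrow> 'a poly) \<Rightarrow> bool" where
  "witt_End \<phi> \<longleftrightarrow>
     (\<forall>f g. \<phi> (f + g) = \<phi> f + \<phi> g) \<and>
     (\<forall>c f. \<phi> (smult c f) = smult c (\<phi> f)) \<and>
     (\<forall>f g. \<phi> (witt_bracket f g) = witt_bracket (\<phi> f) (\<phi> g))"

definition witt_Aut :: "('a::field_char_0 poly \<Rightarrow> 'a poly) \<Rightarrow> bool" where
  "witt_Aut \<phi> \<longleftrightarrow> witt_End \<phi> \<and> bij \<phi> \<and> witt_End (inv \<phi>)"

end

theory Submission
  imports Defs
begin

lemma coeff_mult_pderiv:
  fixes P Q :: "'a::field_char_0 poly"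
  shows "coeff (P * pderiv Q) (degree P + degree Q - 1) = of_nat (degree Q) * lead_coeff P * lead_coeff Q"
proof (cases "degree Q = 0")
  case True
  then have "pderiv Q = 0" by (simp add: pderiv_eq_0_iff)
  then show ?thesis using True by simp
next
  case False
  have d: "degree (pderiv Q) = degree Q - 1" by (rule degree_pderiv)
  have "coeff (P * pderiv Q) (degree P + degree (pderiv Q)) = lead_coeff P * lead_coeff (pderiv Q)"
    by (rule coeff_mult_degree_sum)
  moreover have "lead_coeff (pderiv Q) = of_nat (degree Q) * lead_coeff Q"
    using False by (simp add: d coeff_pderiv)
  ultimately show ?thesis using False d by (simp add: algebra_simps)
qed

lemma wb_coeff:
  fixes P Q :: "'a::field_char_0 poly"
  shows "coeff (witt_bracket P Q) (degree P + degree Q - 1)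
     = (of_nat (degree Q) - of_nat (degree P)) * lead_coeff P * lead_coeff Q"
proof -
  have "coeff (pderiv P * Q) (degree P + degree Q - 1) = of_nat (degree P) * lead_coeff Q * lead_coeff P"
    using coeff_mult_pderiv[of Q P] by (simp add: mult.commute add.commute)
  then show ?thesis unfolding witt_bracket_def using coeff_mult_pderiv[of P Q]
    by (simp add: algebra_simps)
qed

lemma degree_mult_pderiv:
  fixes P Q :: "'a::field_char_0 poly"
  shows "degree (P * pderiv Q) \<le> degree P + degree Q - 1"
proof (cases "degree Q = 0")
  case True
  then have "pderiv Q = 0" by (simp add: pderiv_eq_0_iff)
  then show ?thesis by simp
next
  case False
  have "degree (P * pderiv Q) \<le> degree P + degree (pderiv Q)" by (rule degree_mult_le)
  then show ?thesis using False by (simp add: degree_pderiv)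
qed

lemma wb_degree_le:
  fixes P Q :: "'a::field_char_0 poly"
  shows "degree (witt_bracket P Q) \<le> degree P + degree Q - 1"
proof -
  have "degree (pderiv P * Q) \<le> degree P + degree Q - 1"
    using degree_mult_pderiv[of Q P] by (simp add: mult.commute add.commute)
  then show ?thesis unfolding witt_bracket_def
    using degree_mult_pderiv[of P Q] degree_diff_le by blast
qed

lemma wb_degree_eq:
  fixes P Q :: "'a::field_char_0 poly"
  assumes "P \<noteq> 0" "Q \<noteq> 0" "degree P \<noteq> degree Q"
  shows "degree (witt_bracket P Q) = degree P + degree Q - 1"
proof -
  have "(of_nat (degree Q) - of_nat (degree P) :: 'a) * lead_coeff P * lead_coeff Q \<noteq> 0"
    using assms by simp
  then have "coeff (witt_bracket P Q) (degree P + degree Q - 1) \<noteq> 0"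
    by (metis wb_coeff)
  then have "degree P + degree Q - 1 \<le> degree (witt_bracket P Q)" by (rule le_degree)
  then show ?thesis using wb_degree_le[of P Q] by simp
qed

lemma wb_self [simp]: "witt_bracket P P = 0"
  by (simp add: witt_bracket_def mult.commute)

lemma wb_diff_right: "witt_bracket H (X - smult g Y) = witt_bracket H X - smult g (witt_bracket H Y)"
  by (simp add: witt_bracket_def pderiv_diff pderiv_smult algebra_simps smult_diff_right smult_add_right)

lemma wb_mono1: "witt_bracket 1 (monom 1 (Suc n)) = smult (of_nat (Suc n)) (monom (1::'a::field_char_0) n)"
  by (simp add: witt_bracket_def pderiv_monom smult_monom)

lemma wb_mono2: "witt_bracket (monom 1 1) (monom 1 n) = smult (of_nat n - 1) (monom (1::'a::field_char_0) n)"
  by (cases n) (auto simp add: witt_bracket_def pderiv_monom smult_monom mult_monom poly_eq_iff coeff_monom coeff_pCons split: nat.split)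

lemma aux:
  fixes H B L :: "'a::field_char_0 poly"
  assumes "smult a H - B * smult a L = smult ((1 - k) * a) H + smult (m * a) L"
  shows "smult a (L * B) = smult a (smult k H - smult m L)"
proof -
  have "smult a (L * B) = smult a H - smult ((1 - k) * a) H - smult (m * a) L"
    using assms by (simp add: mult.commute algebra_simps)
  also have "\<dots> = smult a (smult k H - smult m L)"
    by (simp add: algebra_simps smult_diff_right smult_diff_left)
  finally show ?thesis .
qed

lemma eig_ode:
  fixes H X :: "'a::field_char_0 poly"
  assumes h2: "degree H \<ge> 2" and X0: "X \<noteq> 0" and mu: "\<mu> \<noteq> 0"
    and br: "witt_bracket H X = smult \<mu> X"
  shows "\<exists>r. [:-r,1:] * pderiv H = smult (of_nat (degree H)) H - smult \<mu> [:-r,1:]"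
proof -
  have H0: "H \<noteq> 0" using h2 by auto
  have degX: "degree X = degree H"
  proof (rule ccontr)
    assume "degree X \<noteq> degree H"
    then have "degree (witt_bracket H X) = degree H + degree X - 1"
      using wb_degree_eq[of H X] H0 X0 by auto
    moreover have "degree (smult \<mu> X) = degree X" using mu by simp
    ultimately show False using br h2 by simp
  qed
  define g where "g = lead_coeff X / lead_coeff H"
  define R where "R = X - smult g H"
  have lcH: "lead_coeff H \<noteq> 0" using H0 by simp
  have cR: "coeff R (degree H) = 0"
    unfolding R_def g_def using lcH degX by simp
  have dRle: "degree R \<le> degree H" unfolding R_def using degX
    by (metis degree_diff_le degree_smult_le le_refl)
  have brR: "witt_bracket H R = smult \<mu> X"
    unfolding R_def using br by (simp add: wb_diff_right)
  have R0: "R \<noteq> 0"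
  proof
    assume "R = 0"
    then have "smult \<mu> X = 0" using brR by (simp add: witt_bracket_def)
    then show False using mu X0 by simp
  qed
  have dRne: "degree R \<noteq> degree H" using cR R0 by (metis leading_coeff_0_iff)
  have "degree (witt_bracket H R) = degree H + degree R - 1"
    using wb_degree_eq[of H R] H0 R0 dRne by auto
  moreover have "degree (smult \<mu> X) = degree H" using mu degX by simp
  ultimately have dR1: "degree R = 1" using brR dRle dRne by simp
  define \<alpha> where "\<alpha> = coeff R 1"
  define \<beta> where "\<beta> = coeff R 0"
  have a0: "\<alpha> \<noteq> 0" unfolding \<alpha>_def using dR1 R0 by (metis leading_coeff_0_iff)
  have Rform: "R = [:\<beta>, \<alpha>:]"
    unfolding \<alpha>_def \<beta>_def
    by (rule poly_eqI) (use dR1 in \<open>auto simp: coeff_pCons coeff_eq_0 split: nat.split\<close>)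
  define r where "r = - \<beta> / \<alpha>"
  have Rr: "R = smult \<alpha> [:-r,1:]" unfolding Rform r_def using a0 by simp
  have lead: "\<mu> * g = (1 - of_nat (degree H)) * \<alpha>"
  proof -
    have "coeff (witt_bracket H R) (degree H + degree R - 1) = (of_nat (degree R) - of_nat (degree H)) * lead_coeff H * lead_coeff R"
      by (rule wb_coeff)
    then have "coeff (witt_bracket H R) (degree H) = (1 - of_nat (degree H)) * lead_coeff H * \<alpha>"
      using dR1 by (simp add: \<alpha>_def)
    moreover have "coeff (smult \<mu> X) (degree H) = \<mu> * g * lead_coeff H"
      using degX lcH by (simp add: g_def)
    ultimately show ?thesis using brR lcH
      by (metis mult.commute mult.left_commute mult_right_cancel)
  qed
  have Xeq: "X = smult g H + R" unfolding R_def by simp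
  have "witt_bracket H R = smult \<alpha> H - pderiv H * smult \<alpha> [:-r,1:]"
    unfolding witt_bracket_def Rr by (simp add: pderiv_smult pderiv_pCons)
  moreover have "smult \<mu> X = smult ((1 - of_nat (degree H)) * \<alpha>) H + smult (\<mu> * \<alpha>) [:-r,1:]"
    unfolding Xeq Rr using lead by (simp add: smult_add_right)
  ultimately have "smult \<alpha> H - pderiv H * smult \<alpha> [:-r,1:] = smult ((1 - of_nat (degree H)) * \<alpha>) H + smult (\<mu> * \<alpha>) [:-r,1:]"
    using brR by simp
  then have "smult \<alpha> ([:-r,1:] * pderiv H) = smult \<alpha> (smult (of_nat (degree H)) H - smult \<mu> [:-r,1:])"
    by (rule aux)
  then have "[:-r,1:] * pderiv H = smult (of_nat (degree H)) H - smult \<mu> [:-r,1:]"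
    using a0 by (rule smult_cancel[rotated])
  then show ?thesis by blast
qed

lemma eig_cons:
  fixes H :: "'a::field_char_0 poly"
  assumes I: "[:-r,1:] * pderiv H = smult k H - smult \<mu> [:-r,1:]" and k: "k \<noteq> 0"
  shows "poly H r = 0" "(k - 1) * poly (pderiv H) r = \<mu>"
    "\<And>s. poly H s = 0 \<Longrightarrow> s \<noteq> r \<Longrightarrow> poly (pderiv H) s = - \<mu>"
proof -
  have "poly ([:-r,1:] * pderiv H) r = poly (smult k H - smult \<mu> [:-r,1:]) r"
    using I by simp
  then show "poly H r = 0" using k by simp
  have "pderiv ([:-r,1:] * pderiv H) = pderiv (smult k H - smult \<mu> [:-r,1:])"
    using I by simp
  then have "[:-r,1:] * pderiv (pderiv H) + pderiv H = smult k (pderiv H) - [:\<mu>:]"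
    by (simp add: pderiv_mult pderiv_diff pderiv_smult pderiv_pCons algebra_simps)
  then have "poly ([:-r,1:] * pderiv (pderiv H) + pderiv H) r = poly (smult k (pderiv H) - [:\<mu>:]) r"
    by simp
  then show "(k - 1) * poly (pderiv H) r = \<mu>" by (simp add: algebra_simps)
  fix s assume s: "poly H s = 0" "s \<noteq> r"
  have "poly ([:-r,1:] * pderiv H) s = poly (smult k H - smult \<mu> [:-r,1:]) s"
    using I by simp
  then have "(s - r) * poly (pderiv H) s = (s - r) * (- \<mu>)" using s by (simp add: algebra_simps)
  then show "poly (pderiv H) s = - \<mu>" using s(2) by (metis mult_left_cancel right_minus_eq mult_minus_right)
qed

lemma no_h2:
  fixes H X1 X2 X3 :: "'a::field_char_0 poly"
  assumes h2: "degree H \<ge> 2" and nz: "X1 \<noteq> 0" "X2 \<noteq> 0" "X3 \<noteq> 0"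
    and b1: "witt_bracket H X1 = smult (-1) X1"
    and b2: "witt_bracket H X2 = smult 1 X2"
    and b3: "witt_bracket H X3 = smult 2 X3"
  shows False
proof -
  define k :: 'a where "k = of_nat (degree H)"
  have k0: "k \<noteq> 0" using h2 by (simp add: k_def)
  have k1: "k - 1 \<noteq> 0" using h2 by (simp add: k_def)
  obtain r1 where I1: "[:-r1,1:] * pderiv H = smult k H - smult (-1) [:-r1,1:]"
    using eig_ode[OF h2 nz(1) _ b1] k_def by auto
  obtain r2 where I2: "[:-r2,1:] * pderiv H = smult k H - smult 1 [:-r2,1:]"
    using eig_ode[OF h2 nz(2) _ b2] k_def by auto
  obtain r3 where I3: "[:-r3,1:] * pderiv H = smult k H - smult 2 [:-r3,1:]"
    using eig_ode[OF h2 nz(3) _ b3] k_def by auto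
  note c1 = eig_cons[OF I1 k0] and c2 = eig_cons[OF I2 k0] and c3 = eig_cons[OF I3 k0]
  have "r2 \<noteq> r1" using c1(2) c2(2) by auto
  then have e2: "poly (pderiv H) r2 = 1" using c1(3)[OF c2(1)] by simp
  have "r3 \<noteq> r1" using c1(2) c3(2) by auto
  then have e3: "poly (pderiv H) r3 = 1" using c1(3)[OF c3(1)] by simp
  have "k - 1 = 1" using c2(2) e2 by simp
  moreover have "k - 1 = 2" using c3(2) e3 by simp
  ultimately show False by simp
qed

lemma add_sum:
  assumes add: "\<forall>f g. \<phi> (f + g) = \<phi> f + (\<phi> g :: 'b::comm_monoid_add)"
    and z: "\<phi> 0 = 0"
  shows "finite A \<Longrightarrow> \<phi> (sum F A) = (\<Sum>i\<in>A. \<phi> (F i))"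
  by (induction A rule: finite_induct) (simp_all add: z add)

lemma lin_ext:
  fixes \<phi> \<psi> :: "'a::field_char_0 poly \<Rightarrow> 'a poly"
  assumes a1: "\<forall>f g. \<phi> (f + g) = \<phi> f + \<phi> g" and s1: "\<forall>c f. \<phi> (smult c f) = smult c (\<phi> f)"
    and a2: "\<forall>f g. \<psi> (f + g) = \<psi> f + \<psi> g" and s2: "\<forall>c f. \<psi> (smult c f) = smult c (\<psi> f)"
    and m: "\<And>n. \<phi> (monom 1 n) = \<psi> (monom 1 n)"
  shows "\<phi> = \<psi>"
proof
  fix p :: "'a poly"
  have z1: "\<phi> 0 = 0" using s1[rule_format, of 0 0] by simp
  have z2: "\<psi> 0 = 0" using s2[rule_format, of 0 0] by simp
  have pe: "p = (\<Sum>i\<le>degree p. smult (coeff p i) (monom 1 i))"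
    by (simp add: smult_monom poly_as_sum_of_monoms)
  have "\<phi> p = (\<Sum>i\<le>degree p. \<phi> (smult (coeff p i) (monom 1 i)))"
    by (subst pe, rule add_sum[OF a1 z1]) simp
  also have "\<dots> = (\<Sum>i\<le>degree p. \<psi> (smult (coeff p i) (monom 1 i)))"
    using s1 s2 m by simp
  also have "\<dots> = \<psi> p"
    by (subst (2) pe, rule add_sum[OF a2 z2, symmetric]) simp
  finally show "\<phi> p = \<psi> p" .
qed

lemma h1_lead:
  fixes H X :: "'a::field_char_0 poly"
  assumes h1: "degree H = 1" and X0: "X \<noteq> 0" and br: "witt_bracket H X = smult \<mu> X"
  shows "(of_nat (degree X) - 1) * lead_coeff H = \<mu>"
proof -
  have "coeff (witt_bracket H X) (degree H + degree X - 1) = (of_nat (degree X) - of_nat (degree H)) * lead_coeff H * lead_coeff X"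
    by (rule wb_coeff)
  then have "\<mu> * lead_coeff X = (of_nat (degree X) - 1) * lead_coeff H * lead_coeff X"
    using h1 br by simp
  then show ?thesis using X0 by (metis mult_right_cancel leading_coeff_0_iff)
qed

lemma inv_End:
  assumes E: "witt_End \<phi>" and b: "bij \<phi>"
  shows "witt_End (inv \<phi>)"
proof -
  have i1: "\<And>x. inv \<phi> (\<phi> x) = x" using b by (simp add: bij_is_inj)
  have i2: "\<And>y. \<phi> (inv \<phi> y) = y" using b by (simp add: bij_is_surj surj_f_inv_f)
  from E have a: "\<And>f g. \<phi> (f + g) = \<phi> f + \<phi> g" and s: "\<And>c f. \<phi> (smult c f) = smult c (\<phi> f)"
    and w: "\<And>f g. \<phi> (witt_bracket f g) = witt_bracket (\<phi> f) (\<phi> g)"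
    unfolding witt_End_def by auto
  show ?thesis unfolding witt_End_def
  proof (intro conjI allI)
    fix f g
    show "inv \<phi> (f + g) = inv \<phi> f + inv \<phi> g"
      by (metis a i1 i2)
    show "inv \<phi> (witt_bracket f g) = witt_bracket (inv \<phi> f) (inv \<phi> g)"
      by (metis w i1 i2)
  next
    fix c f
    show "inv \<phi> (smult c f) = smult c (inv \<phi> f)"
      by (metis s i1 i2)
  qed
qed

lemma pcompose_monom1: "pcompose (monom 1 n) u = u ^ n"
  by (induction n) (simp_all add: monom_Suc pcompose_pCons pcompose_1)

lemma forward:
  fixes \<phi> :: "'a::field_char_0 poly \<Rightarrow> 'a poly"
  assumes End: "witt_End \<phi>" and nz: "\<phi> \<noteq> (\<lambda>_. 0)"
  shows "bij \<phi>"
proof -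
  from End have a: "\<forall>f g. \<phi> (f + g) = \<phi> f + \<phi> g" and s: "\<forall>c f. \<phi> (smult c f) = smult c (\<phi> f)"
    and w: "\<And>f g. \<phi> (witt_bracket f g) = witt_bracket (\<phi> f) (\<phi> g)"
    unfolding witt_End_def by auto
  define G where "G n = \<phi> (monom 1 n)" for n
  have A: "witt_bracket (G 0) (G (Suc n)) = smult (of_nat (Suc n)) (G n)" for n
    unfolding G_def using w[of 1 "monom 1 (Suc n)"] s by (simp add: wb_mono1)
  have B: "witt_bracket (G 1) (G n) = smult (of_nat n - 1) (G n)" for n
  proof -
    have "\<phi> (witt_bracket (monom 1 1) (monom 1 n)) = smult (of_nat n - 1) (G n)"
      unfolding wb_mono2 G_def using s by blast
    then show ?thesis using w[of "monom 1 1" "monom 1 n"] by (simp only: G_def)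
  qed
  have E0: "G 0 \<noteq> 0"
  proof
    assume G0: "G 0 = 0"
    have "G n = 0" for n
    proof -
      have "smult (of_nat (Suc n)) (G n) = 0" using A[of n] G0 by (simp add: witt_bracket_def)
      then show ?thesis by (metis of_nat_neq_0 smult_eq_0_iff)
    qed
    then have "\<phi> = (\<lambda>_. 0)"
      by (intro lin_ext[OF a s]) (simp_all add: G_def)
    then show False using nz by simp
  qed
  have Gnz: "G n \<noteq> 0" for n
  proof (induction n)
    case 0 then show ?case using E0 .
  next
    case (Suc n)
    show ?case
    proof
      assume "G (Suc n) = 0"
      then have "smult (of_nat (Suc n)) (G n) = 0" using A[of n] by (simp add: witt_bracket_def)
      then show False using Suc by (metis of_nat_neq_0 smult_eq_0_iff)
    qed
  qed
  define E where "E = G 0"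
  define H where "H = G 1"
  have BE: "witt_bracket H E = smult (-1) E" using B[of 0] by (simp add: E_def H_def)
  have B2: "witt_bracket H (G 2) = smult 1 (G 2)" using B[of 2] by (simp add: H_def)
  have B3: "witt_bracket H (G 3) = smult 2 (G 3)" using B[of 3] by (simp add: H_def)
  have h1: "degree H = 1"
  proof -
    have "\<not> degree H \<ge> 2" using no_h2[OF _ Gnz[of 0] Gnz[of 2] Gnz[of 3]] BE B2 B3
      by (auto simp: E_def)
    moreover have "degree H \<noteq> 0"
    proof
      assume h0: "degree H = 0"
      have "degree (witt_bracket H E) \<le> degree H + degree E - 1" by (rule wb_degree_le)
      then have "degree E \<le> degree E - 1" using BE h0 by simp
      then have e0: "degree E = 0" by simp
      have "witt_bracket H E = 0" using h0 e0 pderiv_eq_0_iff[of H] pderiv_eq_0_iff[of E] by (simp add: witt_bracket_def)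
      then show False using BE E0 by (simp add: E_def)
    qed
    ultimately show ?thesis by simp
  qed
  define la where "la = lead_coeff H"
  have l1: "(of_nat (degree E) - 1) * la = -1"
    using h1_lead[OF h1 _ BE] E0 by (simp add: E_def la_def)
  have l3: "(of_nat (degree (G 3)) - 1) * la = 2"
    using h1_lead[OF h1 Gnz[of 3] B3] by (simp add: la_def)
  have la0: "la \<noteq> 0" using l1 by auto
  have "(of_nat (degree (G 3)) - 1) * la = - 2 * ((of_nat (degree E) - 1) * la)" using l1 l3 by simp
  then have "(of_nat (degree (G 3)) - 1 :: 'a) = - 2 * (of_nat (degree E) - 1)"
    using la0 by (metis mult.assoc mult_right_cancel)
  then have "(of_nat (degree (G 3) + 2 * degree E) :: 'a) = of_nat 3"
    by (simp add: algebra_simps)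
  then have "degree (G 3) + 2 * degree E = 3" by (simp only: of_nat_eq_iff)
  moreover have "degree E \<noteq> 1" using l1 by auto
  ultimately have e0: "degree E = 0" by linarith
  then have la1: "la = 1" using l1 by simp
  define c where "c = coeff E 0"
  define b where "b = coeff H 0"
  have Ec: "E = [:c:]" unfolding c_def
    by (rule poly_eqI) (use e0 in \<open>auto simp: coeff_pCons coeff_eq_0 split: nat.split\<close>)
  have c0: "c \<noteq> 0" using E0 Ec by (auto simp: E_def)
  have Hb: "H = [:b, 1:]" unfolding b_def
    by (rule poly_eqI) (use h1 la1 in \<open>auto simp: la_def coeff_pCons coeff_eq_0 split: nat.split\<close>)
  define u where "u = smult (inverse c) H"
  have Gform: "G n = smult c (u ^ n)" for n
  proof (induction n)
    case 0 then show ?case using Ec by (simp add: E_def)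
  next
    case (Suc n)
    define X where "X = G (Suc n)"
    have 1: "smult c (pderiv X) = smult (of_nat (Suc n)) (G n)"
      using A[of n] Ec by (simp add: witt_bracket_def X_def E_def)
    have "H * pderiv X - X = smult (of_nat n) X"
      using B[of "Suc n"] Hb by (simp add: witt_bracket_def X_def H_def pderiv_pCons)
    then have 2: "H * pderiv X = smult (of_nat (Suc n)) X"
      by (simp add: algebra_simps smult_add_left)
    have "smult (of_nat (Suc n)) (smult c X) = smult c (H * pderiv X)"
      using 2 by (simp add: algebra_simps)
    also have "\<dots> = H * smult c (pderiv X)" by simp
    also have "\<dots> = smult (of_nat (Suc n)) (H * G n)" using 1 by simp
    finally have "smult c X = H * G n"
      by (metis of_nat_neq_0 smult_cancel)
    then have "X = smult (inverse c) (H * G n)" 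
    proof -
      have "X = smult (inverse c) (smult c X)" using c0 by simp
      then show ?thesis using \<open>smult c X = H * G n\<close> by simp
    qed
    then show ?case unfolding X_def u_def Suc using c0 by (simp add: mult.assoc)
  qed
  define \<psi> where "\<psi> p = smult c (pcompose p u)" for p
  have "\<phi> = \<psi>"
    by (rule lin_ext[OF a s]) (simp_all add: \<psi>_def pcompose_add pcompose_smult pcompose_monom1 smult_add_right Gform[unfolded G_def] mult.commute)
  define v where "v = [:-b, c:]"
  define \<chi> where "\<chi> q = pcompose (smult (inverse c) q) v" for q
  have uv: "pcompose u v = [:0,1:]" using c0 by (simp add: u_def v_def Hb pcompose_pCons)
  have vu: "pcompose v u = [:0,1:]" using c0 by (simp add: u_def v_def Hb pcompose_pCons)
  have "\<chi> \<circ> \<psi> = id"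
  proof
    fix p show "(\<chi> \<circ> \<psi>) p = id p"
      using c0 by (simp add: \<chi>_def \<psi>_def pcompose_smult flip: pcompose_assoc add: uv)
  qed
  moreover have "\<psi> \<circ> \<chi> = id"
  proof
    fix p show "(\<psi> \<circ> \<chi>) p = id p"
      using c0 by (simp add: \<chi>_def \<psi>_def pcompose_smult flip: pcompose_assoc add: vu)
  qed
  ultimately have "bij \<psi>" by (rule o_bij)
  then show ?thesis using \<open>\<phi> = \<psi>\<close> by simp
qed

theorem mainTheorem12:
  "{\<phi> :: 'a::field_char_0 poly \<Rightarrow> 'a poly. witt_End \<phi> \<and> \<phi> \<noteq> (\<lambda>_. 0)}
     = {\<phi>. witt_Aut \<phi>}"
proof (rule set_eqI, rule iffI)
  fix \<phi> :: "'a poly \<Rightarrow> 'a poly"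
  assume "\<phi> \<in> {\<phi>. witt_End \<phi> \<and> \<phi> \<noteq> (\<lambda>_. 0)}"
  then have E: "witt_End \<phi>" and n: "\<phi> \<noteq> (\<lambda>_. 0)" by auto
  have b: "bij \<phi>" by (rule forward[OF E n])
  show "\<phi> \<in> {\<phi>. witt_Aut \<phi>}" using E b inv_End[OF E b] by (simp add: witt_Aut_def)
next
  fix \<phi> :: "'a poly \<Rightarrow> 'a poly"
  assume "\<phi> \<in> {\<phi>. witt_Aut \<phi>}"
  then have E: "witt_End \<phi>" and b: "bij \<phi>" by (auto simp: witt_Aut_def)
  then obtain x where "\<phi> x = 1" by (metis bij_is_surj surjD)
  then have "\<phi> \<noteq> (\<lambda>_. 0)" by (metis one_neq_zero)
  then show "\<phi> \<in> {\<phi>. witt_End \<phi> \<and> \<phi> \<noteq> (\<lambda>_. 0)}" using E by simp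
qed

end
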